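(* Let $(x(t),y(t))$ be any trajectory of system (5), and define $\Psi(t)=\max_{i\in\mathcal V_F}|x_i(t)|^2_{\mathcal L(y(t))}$ and $q(t)=\max_{i\in\mathcal V_L}|u_i(y(t),t)|+\max_{i\in\mathcal V_F}|w_i(t)|$. Then for all $t\ge0$ the upper Dini derivative satisfies $D^+\sqrt{\Psi(t)}\le q(t)$, where $D^+h(t)=\limsup_{s\to0^+}\frac{h(t+s)-h(t)}{s}$.
   Context: Standing setup. Fix integers $n\ge 2$, $k\ge 1$, $d\ge 1$. The follower set is $\mathcal V_F=\{1,\dots,n\}$ and the leader set is $\mathcal V_L=\{\hat 1,\dots,\hat k\}$ (disjoint from $\mathcal V_F$); $\mathcal V=\mathcal V_F\cup\mathcal V_L$. The interaction topology is a time-varying digraph $\mathcal G_{\sigma(t)}=(\mathcal V,\mathcal E_{\sigma(t)})$, where $\sigma:[0,\infty)\to\mathcal P$ is a piecewise constant switching signal taking values in a finite set $\mathcal P$ of digraphs on $\mathcal V$; no arc of any of these digraphs enters a leader. An arc $(j,i)$ means that $i$ receives information from $j$. Dwell-time assumption: any two consecutive switching instants of $\sigma$ are separated by at least $\tau_D>0$. For $i\in\mathcal V_F$, $N_i(\sigma(t))=\{j\in\mathcal V_F:(j,i)\in\mathcal E_{\sigma(t)}\}$ and $L_i(\sigma(t))=\{j\in\mathcal V_L:(j,i)\in\mathcal E_{\sigma(t)}\}$. System (5): $\dot y_i=u_i(y,t)$ for $i=1,\dots,k$, and $\dot x_i=\sum_{j\in N_i(\sigma(t))}a_{ij}(x,y,t)(x_j-x_i)+\sum_{j\in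 L_i(\sigma(t))}b_{ij}(x,y,t)(y_j-x_i)+w_i(t)$ for $i=1,\dots,n$, where $x_i,y_j\in\mathbb R^d$, $x=(x_1,\dots,x_n)$, $y=(y_1,\dots,y_k)$; each $u_i(y,t)$ is continuous in $y$ and piecewise continuous in $t$; each $w_i$ is continuous; the weights $a_{ij},b_{ij}$ are continuous and satisfy $a_*\le a_{ij}(x,y,t)\le a^*$, $b_{ij}(x,y,t)\ge b_*$ for all $x,y,t$, with constants $0<a_*\le a^*$, $b_*>0$. Set notation: $|\cdot|$ is the Euclidean norm; for a closed convex $K\subset\mathbb R^d$, $|v|_K=\inf_{p\in K}|v-p|$; $\mathcal L(y(t))=\mathrm{co}\{y_1(t),\dots,y_k(t)\}$ (convex hull). *)

theory Defs
  imports "HOL-Analysis.Analysis"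
begin

text \<open>Vertices: Inl i is follower i (i in 1..n), Inr j is leader hat j (j in 1..k).
  A digraph is given by its arc set; an arc (j,i) means i receives information from j.\<close>

type_synonym vertex = "nat + nat"
type_synonym digraph = "(vertex \<times> vertex) set"

definition vertices :: "nat \<Rightarrow> nat \<Rightarrow> vertex set" where
  "vertices n k = Inl ` {1..n} \<union> Inr ` {1..k}"

definition admissible_digraph :: "nat \<Rightarrow> nat \<Rightarrow> digraph \<Rightarrow> bool" where
  "admissible_digraph n k E \<longleftrightarrow>
     E \<subseteq> vertices n k \<times> vertices n k \<and> (\<forall>e\<in>E. \<forall>j. snd e \<noteq> Inr j)"

definition N_F :: "nat \<Rightarrow> digraph \<Rightarrow> nat \<Rightarrow> nat set" where
  "N_F n E i = {j \<in> {1..n}. (Inl j, Inl i) \<in> E}"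

definition L_L :: "nat \<Rightarrow> digraph \<Rightarrow> nat \<Rightarrow> nat set" where
  "L_L k E i = {j \<in> {1..k}. (Inr j, Inl i) \<in> E}"

definition switching_signal :: "digraph set \<Rightarrow> real \<Rightarrow> (real \<Rightarrow> digraph) \<Rightarrow> bool" where
  "switching_signal P tauD \<sigma> \<longleftrightarrow>
     (\<forall>t\<ge>0. \<sigma> t \<in> P) \<and>
     (\<exists>D. D \<subseteq> {0<..} \<and> (\<forall>a\<in>D. \<forall>b\<in>D. a \<noteq> b \<longrightarrow> \<bar>a - b\<bar> \<ge> tauD) \<and>
          (\<forall>t1 t2. 0 \<le> t1 \<longrightarrow> t1 < t2 \<longrightarrow> {t1<..<t2} \<inter> D = {} \<longrightarrow>
                (\<forall>s\<in>{t1..<t2}. \<sigma> s = \<sigma> t1)))"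

definition piecewise_continuous :: "(real \<Rightarrow> 'a::topological_space) \<Rightarrow> bool" where
  "piecewise_continuous f \<longleftrightarrow>
     (\<forall>T\<ge>0. \<exists>S. finite S \<and> continuous_on ({0..T} - S) f \<and>
        (\<forall>s\<in>S. (\<exists>l. (f \<longlongrightarrow> l) (at_left s)) \<and> (\<exists>l. (f \<longlongrightarrow> l) (at_right s))))"

definition upper_dini :: "(real \<Rightarrow> real) \<Rightarrow> real \<Rightarrow> ereal" where
  "upper_dini h t = Limsup (at_right 0) (\<lambda>s. ereal ((h (t + s) - h t) / s))"

text \<open>Trajectory of system (5) on [0,\<infinity>): x i t, y j t; solution in the sense that x, y are
  continuous on [0,\<infinity>) and the right derivative at every t \<ge> 0 equals the right-hand side.\<close>
definition trajectory5 ::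
  "nat \<Rightarrow> nat \<Rightarrow> (real \<Rightarrow> digraph)
   \<Rightarrow> (nat \<Rightarrow> (nat \<Rightarrow> 'a::euclidean_space) \<Rightarrow> real \<Rightarrow> 'a)
   \<Rightarrow> (nat \<Rightarrow> nat \<Rightarrow> (nat \<Rightarrow> 'a) \<Rightarrow> (nat \<Rightarrow> 'a) \<Rightarrow> real \<Rightarrow> real)
   \<Rightarrow> (nat \<Rightarrow> nat \<Rightarrow> (nat \<Rightarrow> 'a) \<Rightarrow> (nat \<Rightarrow> 'a) \<Rightarrow> real \<Rightarrow> real)
   \<Rightarrow> (nat \<Rightarrow> real \<Rightarrow> 'a)
   \<Rightarrow> (nat \<Rightarrow> real \<Rightarrow> 'a) \<Rightarrow> (nat \<Rightarrow> real \<Rightarrow> 'a) \<Rightarrow> bool" where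
  "trajectory5 n k \<sigma> u a b w x y \<longleftrightarrow>
     (\<forall>i\<in>{1..n}. continuous_on {0..} (x i)) \<and>
     (\<forall>j\<in>{1..k}. continuous_on {0..} (y j)) \<and>
     (\<forall>t\<ge>0. \<forall>j\<in>{1..k}.
        (y j has_vector_derivative u j (\<lambda>l. y l t) t) (at t within {t..})) \<and>
     (\<forall>t\<ge>0. \<forall>i\<in>{1..n}.
        (x i has_vector_derivative
           (\<Sum>j\<in>N_F n (\<sigma> t) i. a i j (\<lambda>l. x l t) (\<lambda>l. y l t) t *\<^sub>R (x j t - x i t))
         + (\<Sum>j\<in>L_L k (\<sigma> t) i. b i j (\<lambda>l. x l t) (\<lambda>l. y l t) t *\<^sub>R (y j t - x i t))
         + w i t) (at t within {t..}))"

end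

theory Submission
  imports Defs
begin


lemma sublevel_convex:
  fixes K :: "'a::euclidean_space set"
  assumes "convex K" "closed K" "K \<noteq> {}"
  shows "convex {v. infdist v K \<le> D}"
proof (rule convexI)
  fix v1 v2 and t1 t2 :: real
  assume v1: "v1 \<in> {v. infdist v K \<le> D}" and v2: "v2 \<in> {v. infdist v K \<le> D}"
    and t: "0 \<le> t1" "0 \<le> t2" "t1 + t2 = 1"
  obtain p1 where p1: "p1 \<in> K" "infdist v1 K = dist v1 p1"
    using infdist_attains_inf[OF assms(2,3)] by blast
  obtain p2 where p2: "p2 \<in> K" "infdist v2 K = dist v2 p2"
    using infdist_attains_inf[OF assms(2,3)] by blast
  have pin: "t1 *\<^sub>R p1 + t2 *\<^sub>R p2 \<in> K"
    using convexD[OF assms(1) p1(1) p2(1) t] .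
  have "dist (t1 *\<^sub>R v1 + t2 *\<^sub>R v2) (t1 *\<^sub>R p1 + t2 *\<^sub>R p2)
      = norm (t1 *\<^sub>R (v1 - p1) + t2 *\<^sub>R (v2 - p2))"
    by (simp add: dist_norm algebra_simps)
  also have "\<dots> \<le> norm (t1 *\<^sub>R (v1 - p1)) + norm (t2 *\<^sub>R (v2 - p2))"
    by (rule norm_triangle_ineq)
  also have "\<dots> = t1 * dist v1 p1 + t2 * dist v2 p2"
    using t by (simp add: dist_norm)
  also have "\<dots> \<le> t1 * D + t2 * D"
    using v1 v2 p1 p2 t by (intro add_mono mult_left_mono) auto
  also have "\<dots> = D" using t by (metis distrib_right mult_1)
  finally show "t1 *\<^sub>R v1 + t2 *\<^sub>R v2 \<in> {v. infdist v K \<le> D}"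
    using infdist_le[OF pin, of "t1 *\<^sub>R v1 + t2 *\<^sub>R v2"] by simp
qed

lemma comb_in_convex:
  fixes S :: "'a::real_vector set"
  assumes "convex S" "z \<in> S" "finite A" "\<forall>m\<in>A. 0 \<le> c m" "sum c A \<le> 1" "\<forall>m\<in>A. w m \<in> S"
  shows "z + (\<Sum>m\<in>A. c m *\<^sub>R (w m - z)) \<in> S"
proof -
  define u where "u = case_option (1 - sum c A) c"
  define y where "y = case_option z w"
  have fin: "finite (insert None (Some ` A))" using assms(3) by simp
  have nn: "None \<notin> Some ` A" by auto
  have inj: "inj_on Some A" by simp
  have s1: "(\<Sum>i\<in>insert None (Some ` A). u i) = 1"
    using assms(3) nn by (simp add: sum.insert sum.reindex[OF inj] u_def o_def)
  have "(\<Sum>j\<in>insert None (Some ` A). u j *\<^sub>R y j) \<in> S"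
    by (rule convex_sum[OF fin assms(1) s1]) (use assms in \<open>auto simp: u_def y_def\<close>)
  moreover have "(\<Sum>j\<in>insert None (Some ` A). u j *\<^sub>R y j)
      = (1 - sum c A) *\<^sub>R z + (\<Sum>m\<in>A. c m *\<^sub>R w m)"
    using assms(3) nn by (simp add: sum.insert sum.reindex[OF inj] u_def y_def o_def)
  moreover have "z + (\<Sum>m\<in>A. c m *\<^sub>R (w m - z)) = (1 - sum c A) *\<^sub>R z + (\<Sum>m\<in>A. c m *\<^sub>R w m)"
    by (simp add: scaleR_diff_right sum_subtractf scaleR_sum_left algebra_simps)
  ultimately show ?thesis by simp
qed

lemma hull_shift:
  fixes f g :: "nat \<Rightarrow> 'a::euclidean_space"
  assumes "finite J" "J \<noteq> {}" "\<forall>j\<in>J. dist (f j) (g j) \<le> M"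
  shows "infdist z (convex hull (f ` J)) \<le> infdist z (convex hull (g ` J)) + M"
proof -
  define Kf where "Kf = convex hull (f ` J)"
  have cf: "closed Kf" unfolding Kf_def
    by (simp add: assms(1) compact_convex_hull compact_imp_closed finite_imp_compact)
  have nf: "Kf \<noteq> {}" unfolding Kf_def using assms(2) by simp
  have cvf: "convex Kf" unfolding Kf_def by simp
  have sub: "convex hull (g ` J) \<subseteq> {v. infdist v Kf \<le> M}"
  proof (rule hull_minimal)
    show "g ` J \<subseteq> {v. infdist v Kf \<le> M}"
    proof
      fix v assume "v \<in> g ` J"
      then obtain j where j: "j \<in> J" "v = g j" by auto
      have "f j \<in> Kf" unfolding Kf_def using j by (simp add: hull_inc)
      then show "v \<in> {v. infdist v Kf \<le> M}"
        using infdist_le2[of "f j" Kf "g j" M] j assms(3) by (simp add: dist_commute)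
    qed
    show "convex {v. infdist v Kf \<le> M}" by (rule sublevel_convex[OF cvf cf nf])
  qed
  have cg: "closed (convex hull (g ` J))"
    by (simp add: assms(1) compact_convex_hull compact_imp_closed finite_imp_compact)
  have ng: "convex hull (g ` J) \<noteq> {}" using assms(2) by simp
  obtain p where p: "p \<in> convex hull (g ` J)" "infdist z (convex hull (g ` J)) = dist z p"
    using infdist_attains_inf[OF cg ng] by blast
  have "infdist z Kf \<le> infdist p Kf + dist z p" by (rule infdist_triangle)
  also have "\<dots> \<le> M + dist z p" using sub p by auto
  finally show ?thesis using p by (simp add: Kf_def)
qed

lemma deriv_ev:
  fixes f :: "real \<Rightarrow> 'a::real_normed_vector"
  assumes "(f has_vector_derivative f') (at t within {t..})" "0 < e"
  shows "eventually (\<lambda>h. norm (f (t+h) - f t - h *\<^sub>R f') \<le> e * h) (at_right 0)"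
proof -
  from assms(1) have "(f has_derivative (\<lambda>x. x *\<^sub>R f')) (at t within {t..})"
    by (simp add: has_vector_derivative_def)
  then obtain d where d: "d > 0" "\<forall>y\<in>{t..}. norm (y - t) < d \<longrightarrow>
      norm (f y - f t - (y - t) *\<^sub>R f') \<le> e * norm (y - t)"
    unfolding has_derivative_within_alt using assms(2) by blast
  show ?thesis
    using eventually_at_right_real[OF d(1)]
  proof (rule eventually_mono)
    fix h assume "h \<in> {0<..<d}"
    then show "norm (f (t+h) - f t - h *\<^sub>R f') \<le> e * h"
      using d(2)[rule_format, of "t+h"] by simp
  qed
qed



lemma main_at:
  fixes n k :: nat and \<sigma> :: "real \<Rightarrow> digraph"
    and u :: "nat \<Rightarrow> (nat \<Rightarrow> 'a::euclidean_space) \<Rightarrow> real \<Rightarrow> 'a"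
    and a b :: "nat \<Rightarrow> nat \<Rightarrow> (nat \<Rightarrow> 'a) \<Rightarrow> (nat \<Rightarrow> 'a) \<Rightarrow> real \<Rightarrow> real"
    and w :: "nat \<Rightarrow> real \<Rightarrow> 'a"
    and x y :: "nat \<Rightarrow> real \<Rightarrow> 'a"
  assumes n: "n \<ge> 2" and k: "k \<ge> 1"
    and a_nn: "\<forall>i\<in>{1..n}. \<forall>j\<in>{1..n}. \<forall>X Y t. 0 \<le> a i j X Y t"
    and b_nn: "\<forall>i\<in>{1..n}. \<forall>j\<in>{1..k}. \<forall>X Y t. 0 \<le> b i j X Y t"
    and traj: "trajectory5 n k \<sigma> u a b w x y"
    and t: "t \<ge> 0"
  shows "upper_dini (\<lambda>s. sqrt (Max ((\<lambda>i. (infdist (x i s) (convex hull (\<lambda>j. y j s) ` {1..k}))\<^sup>2) ` {1..n}))) t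
       \<le> ereal (Max ((\<lambda>i. norm (u i (\<lambda>j. y j t) t)) ` {1..k}) + Max ((\<lambda>i. norm (w i t)) ` {1..n}))"
proof -
  define K where "K s = convex hull ((\<lambda>j. y j s) ` {1..k})" for s
  define d where "d i s = infdist (x i s) (K s)" for i s
  define F where "F s = sqrt (Max ((\<lambda>i. (d i s)\<^sup>2) ` {1..n}))" for s
  define X where "X = (\<lambda>l. x l t)"
  define Y where "Y = (\<lambda>l. y l t)"
  define U where "U = Max ((\<lambda>i. norm (u i Y t)) ` {1..k})"
  define W where "W = Max ((\<lambda>i. norm (w i t)) ` {1..n})"
  define q where "q = U + W"
  define A where "A i = Inl ` N_F n (\<sigma> t) i \<union> Inr ` L_L k (\<sigma> t) i" for i
  define c where "c i m = (case m of Inl j \<Rightarrow> a i j X Y t | Inr j \<Rightarrow> b i j X Y t)" for i m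
  define pt where "pt m = (case m of Inl j \<Rightarrow> x j t | Inr j \<Rightarrow> y j t)" for m
  define g where "g i = (\<Sum>m\<in>A i. c i m *\<^sub>R (pt m - x i t))" for i
  define S where "S i = sum (c i) (A i)" for i
  define v where "v i = (\<Sum>j\<in>N_F n (\<sigma> t) i. a i j X Y t *\<^sub>R (x j t - x i t))
         + (\<Sum>j\<in>L_L k (\<sigma> t) i. b i j X Y t *\<^sub>R (y j t - x i t)) + w i t" for i
  have NF: "N_F n (\<sigma> t) i \<subseteq> {1..n}" for i by (auto simp: N_F_def)
  have LL: "L_L k (\<sigma> t) i \<subseteq> {1..k}" for i by (auto simp: L_L_def)
  have finA: "finite (A i)" for i
    unfolding A_def using finite_subset[OF NF] finite_subset[OF LL] by auto
  have gv: "v i = g i + w i t" for i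
  proof -
    have disj: "Inl ` N_F n (\<sigma> t) i \<inter> Inr ` L_L k (\<sigma> t) i = {}" by auto
    have "g i = (\<Sum>m\<in>Inl ` N_F n (\<sigma> t) i. c i m *\<^sub>R (pt m - x i t))
             + (\<Sum>m\<in>Inr ` L_L k (\<sigma> t) i. c i m *\<^sub>R (pt m - x i t))"
      unfolding g_def A_def
      by (rule sum.union_disjoint) (use finite_subset[OF NF] finite_subset[OF LL] disj in auto)
    also have "\<dots> = (\<Sum>j\<in>N_F n (\<sigma> t) i. a i j X Y t *\<^sub>R (x j t - x i t))
         + (\<Sum>j\<in>L_L k (\<sigma> t) i. b i j X Y t *\<^sub>R (y j t - x i t))"
      by (simp add: sum.reindex c_def pt_def)
    finally show ?thesis unfolding v_def by simp
  qed
  have c_nn: "\<forall>m\<in>A i. 0 \<le> c i m" if "i \<in> {1..n}" for i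
    proof
    fix m assume m: "m \<in> A i"
    show "0 \<le> c i m"
    proof (cases m)
      case (Inl j)
      then have "j \<in> N_F n (\<sigma> t) i" using m unfolding A_def by auto
      then have "j \<in> {1..n}" using NF by blast
      then show ?thesis using Inl that a_nn unfolding c_def by simp
    next
      case (Inr j)
      then have "j \<in> L_L k (\<sigma> t) i" using m unfolding A_def by auto
      then have "j \<in> {1..k}" using LL by blast
      then show ?thesis using Inr that b_nn unfolding c_def by simp
    qed
  qed
  have S_nn: "0 \<le> S i" if "i \<in> {1..n}" for i
    unfolding S_def using c_nn[OF that] by (simp add: sum_nonneg)
  have Uge: "norm (u j Y t) \<le> U" if "j \<in> {1..k}" for j
    unfolding U_def using that by (intro Max_ge) auto
  have Wge: "norm (w i t) \<le> W" if "i \<in> {1..n}" for i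
    unfolding W_def using that by (intro Max_ge) auto
  have U0: "0 \<le> U" using Uge[of 1] k by (meson atLeastAtMost_iff le_refl norm_ge_zero order_trans)
  have W0: "0 \<le> W" using Wge[of 1] n by (meson atLeastAtMost_iff le_refl norm_ge_zero order_trans one_le_numeral)
  from traj have dy: "\<forall>j\<in>{1..k}. (y j has_vector_derivative u j Y t) (at t within {t..})"
    and dx: "\<forall>i\<in>{1..n}. (x i has_vector_derivative v i) (at t within {t..})"
    using t unfolding trajectory5_def X_def Y_def v_def by auto
  define D where "D = F t"
  have dle: "d i t \<le> D" if "i \<in> {1..n}" for i
  proof -
    have "(d i t)\<^sup>2 \<le> Max ((\<lambda>i. (d i t)\<^sup>2) ` {1..n})" using that by (intro Max_ge) auto
    then have "sqrt ((d i t)\<^sup>2) \<le> D" unfolding D_def F_def by (rule real_sqrt_le_mono)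
    then show ?thesis by (simp add: d_def infdist_nonneg)
  qed
  have D0: "0 \<le> D" proof -
    have "1 \<in> {1..n}" using n by simp
    from dle[OF this] show ?thesis unfolding d_def by (meson infdist_nonneg order_trans)
  qed
  have Kt: "convex (K t)" "closed (K t)" "K t \<noteq> {}"
    unfolding K_def using k
    by (auto simp add: compact_convex_hull compact_imp_closed finite_imp_compact)
  define Ss where "Ss = {v. infdist v (K t) \<le> D}"
  have cS: "convex Ss" unfolding Ss_def by (rule sublevel_convex[OF Kt])
  have xS: "x j t \<in> Ss" if "j \<in> {1..n}" for j using dle[OF that] unfolding Ss_def d_def by simp
  have yS: "y j t \<in> Ss" if "j \<in> {1..k}" for j
  proof -
    have "y j t \<in> K t" unfolding K_def using that by (simp add: hull_inc)
    then show ?thesis unfolding Ss_def using D0 by simp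
  qed
  have ptS: "\<forall>m\<in>A i. pt m \<in> Ss" for i
    unfolding A_def pt_def using subsetD[OF NF] subsetD[OF LL] xS yS by auto
  show ?thesis
  proof -
    have key: "\<forall>\<^sub>F h in at_right 0. (F (t + h) - F t) / h \<le> q + e" if e: "0 < e" for e
    proof -
      have e2: "0 < e/2" using e by simp
      have ev0: "\<forall>\<^sub>F h in at_right (0::real). 0 < h" by (rule eventually_at_right_less)
      have ev1: "\<forall>\<^sub>F h in at_right (0::real). \<forall>i\<in>{1..n}. h * S i \<le> 1"
      proof (rule eventually_ball_finite, simp, intro ballI)
        fix i assume i: "i \<in> {1..n}"
        have p: "0 < 1 / (S i + 1)" using S_nn[OF i] by simp
        show "\<forall>\<^sub>F h in at_right 0. h * S i \<le> 1"
          using eventually_at_right_real[OF p]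
        proof (rule eventually_mono)
          fix h assume "h \<in> {0<..<1 / (S i + 1)}"
          then have "h * (S i + 1) < 1" using S_nn[OF i]
            by (simp add: pos_less_divide_eq add_nonneg_pos)
          then show "h * S i \<le> 1" using \<open>h \<in> _\<close> by (simp add: distrib_left)
        qed
      qed
      have ev2: "\<forall>\<^sub>F h in at_right 0. \<forall>j\<in>{1..k}. norm (y j (t+h) - y j t - h *\<^sub>R u j Y t) \<le> e/2 * h"
        by (rule eventually_ball_finite) (use dy deriv_ev[OF _ e2] in auto)
      have ev3: "\<forall>\<^sub>F h in at_right 0. \<forall>i\<in>{1..n}. norm (x i (t+h) - x i t - h *\<^sub>R v i) \<le> e/2 * h"
        by (rule eventually_ball_finite) (use dx deriv_ev[OF _ e2] in auto)
      show ?thesis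
        using ev0 ev1 ev2 ev3
      proof (eventually_elim)
        case (elim h)
        have h0: "0 < h" using elim by simp
        have di: "d i (t+h) \<le> D + h * (q + e)" if i: "i \<in> {1..n}" for i
        proof -
          have "x i t + (\<Sum>m\<in>A i. (h * c i m) *\<^sub>R (pt m - x i t)) \<in> Ss"
          proof (rule comb_in_convex[OF cS xS[OF i] finA])
            show "\<forall>m\<in>A i. 0 \<le> h * c i m" using c_nn[OF i] h0 by simp
            show "sum (\<lambda>m. h * c i m) (A i) \<le> 1"
              using elim i by (simp add: S_def flip: sum_distrib_left)
            show "\<forall>m\<in>A i. pt m \<in> Ss" by (rule ptS)
          qed
          moreover have "(\<Sum>m\<in>A i. (h * c i m) *\<^sub>R (pt m - x i t)) = h *\<^sub>R g i"
            unfolding g_def by (simp add: scaleR_sum_right)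
          ultimately have g1: "infdist (x i t + h *\<^sub>R g i) (K t) \<le> D" unfolding Ss_def by simp
          have "infdist (x i t + h *\<^sub>R v i) (K t)
               \<le> infdist (x i t + h *\<^sub>R g i) (K t) + dist (x i t + h *\<^sub>R v i) (x i t + h *\<^sub>R g i)"
            by (rule infdist_triangle)
          also have "dist (x i t + h *\<^sub>R v i) (x i t + h *\<^sub>R g i) = h * norm (w i t)"
            using h0 by (simp add: gv dist_norm algebra_simps)
          also have "h * norm (w i t) \<le> h * W" using Wge[OF i] h0 by simp
          finally have g2: "infdist (x i t + h *\<^sub>R v i) (K t) \<le> D + h * W" using g1 by simp
          have "infdist (x i (t+h)) (K t) \<le> infdist (x i t + h *\<^sub>R v i) (K t) + dist (x i (t+h)) (x i t + h *\<^sub>R v i)"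
            by (rule infdist_triangle)
          also have "dist (x i (t+h)) (x i t + h *\<^sub>R v i) \<le> e/2 * h"
            using elim i by (simp add: dist_norm algebra_simps)
          finally have g3: "infdist (x i (t+h)) (K t) \<le> D + h * W + e/2 * h" using g2 by simp
          have "d i (t+h) \<le> infdist (x i (t+h)) (K t) + h * (U + e/2)"
            unfolding d_def K_def
          proof (rule hull_shift)
            show "finite {1..k}" by simp
            show "{1..k} \<noteq> {}" using k by simp
            show "\<forall>j\<in>{1..k}. dist (y j (t + h)) (y j t) \<le> h * (U + e / 2)"
            proof
              fix j assume j: "j \<in> {1..k}"
              have "dist (y j (t + h)) (y j t) \<le> norm (y j (t+h) - y j t - h *\<^sub>R u j Y t) + norm (h *\<^sub>R u j Y t)"
                unfolding dist_norm using norm_triangle_ineq[of "y j (t+h) - y j t - h *\<^sub>R u j Y t" "h *\<^sub>R u j Y t"] by simp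
              also have "\<dots> \<le> e/2 * h + h * U"
                using elim j Uge[OF j] h0 by (intro add_mono) (auto intro: mult_left_mono)
              finally show "dist (y j (t + h)) (y j t) \<le> h * (U + e / 2)" by (simp add: algebra_simps)
            qed
          qed
          with g3 show ?thesis by (simp add: q_def algebra_simps)
        qed
        have Fle: "F (t+h) \<le> D + h * (q + e)"
        proof -
          have nn: "0 \<le> D + h * (q + e)" using D0 h0 U0 W0 e by (simp add: q_def)
          have "Max ((\<lambda>i. (d i (t+h))\<^sup>2) ` {1..n}) \<le> (D + h * (q + e))\<^sup>2"
            using n di by (subst Max_le_iff) (auto intro!: power_mono simp: d_def infdist_nonneg)
          then have "F (t+h) \<le> sqrt ((D + h * (q + e))\<^sup>2)" unfolding F_def by (rule real_sqrt_le_mono)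
          then show ?thesis using nn by simp
        qed
        show ?case using Fle h0 unfolding D_def by (simp add: pos_divide_le_eq algebra_simps)
      qed
    qed
    have "upper_dini F t \<le> ereal q"
    proof (rule ereal_le_epsilon2)
      fix e :: real assume e: "0 < e"
      have "upper_dini F t \<le> ereal (q + e)"
        unfolding upper_dini_def
        by (rule Limsup_bounded) (use key[OF e] in \<open>auto elim: eventually_mono\<close>)
      then show "upper_dini F t \<le> ereal q + ereal e" by simp
    qed
    moreover have "F = (\<lambda>s. sqrt (Max ((\<lambda>i. (infdist (x i s) (convex hull (\<lambda>j. y j s) ` {1..k}))\<^sup>2) ` {1..n})))"
      by (simp add: fun_eq_iff F_def d_def K_def)
    ultimately show ?thesis by (simp add: q_def U_def W_def Y_def)
  qed
qed

theorem lemma4: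
  fixes n k :: nat and P :: "digraph set" and \<sigma> :: "real \<Rightarrow> digraph" and tauD :: real
    and u :: "nat \<Rightarrow> (nat \<Rightarrow> 'a::euclidean_space) \<Rightarrow> real \<Rightarrow> 'a"
    and a b :: "nat \<Rightarrow> nat \<Rightarrow> (nat \<Rightarrow> 'a) \<Rightarrow> (nat \<Rightarrow> 'a) \<Rightarrow> real \<Rightarrow> real"
    and w :: "nat \<Rightarrow> real \<Rightarrow> 'a"
    and a_low a_up b_low :: real
    and x y :: "nat \<Rightarrow> real \<Rightarrow> 'a"
  assumes n: "n \<ge> 2" and k: "k \<ge> 1"
    and P: "finite P" "\<forall>E\<in>P. admissible_digraph n k E"
    and tauD: "tauD > 0"
    and sigma: "switching_signal P tauD \<sigma>"
    and u_cont: "\<forall>i\<in>{1..k}. \<forall>t. continuous_on UNIV (\<lambda>z. u i z t)"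
    and u_pw: "\<forall>i\<in>{1..k}. \<forall>z. piecewise_continuous (u i z)"
    and w_cont: "\<forall>i\<in>{1..n}. continuous_on UNIV (w i)"
    and constants: "0 < a_low" "a_low \<le> a_up" "0 < b_low"
    and a_cont: "\<forall>i\<in>{1..n}. \<forall>j\<in>{1..n}.
        continuous_on UNIV (\<lambda>(p::(nat \<Rightarrow> 'a) \<times> (nat \<Rightarrow> 'a) \<times> real). a i j (fst p) (fst (snd p)) (snd (snd p)))"
    and b_cont: "\<forall>i\<in>{1..n}. \<forall>j\<in>{1..k}.
        continuous_on UNIV (\<lambda>(p::(nat \<Rightarrow> 'a) \<times> (nat \<Rightarrow> 'a) \<times> real). b i j (fst p) (fst (snd p)) (snd (snd p)))"
    and a_bnd: "\<forall>i\<in>{1..n}. \<forall>j\<in>{1..n}. \<forall>X Y t. a_low \<le> a i j X Y t \<and> a i j X Y t \<le> a_up"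
    and b_bnd: "\<forall>i\<in>{1..n}. \<forall>j\<in>{1..k}. \<forall>X Y t. b_low \<le> b i j X Y t"
    and traj: "trajectory5 n k \<sigma> u a b w x y"
  shows "\<forall>t\<ge>0.
     upper_dini (\<lambda>s. sqrt (Max ((\<lambda>i. (infdist (x i s) (convex hull (\<lambda>j. y j s) ` {1..k}))\<^sup>2) ` {1..n}))) t
       \<le> ereal (Max ((\<lambda>i. norm (u i (\<lambda>j. y j t) t)) ` {1..k}) + Max ((\<lambda>i. norm (w i t)) ` {1..n}))"
proof (intro allI impI)
  fix t :: real assume t: "t \<ge> 0"
  show "upper_dini (\<lambda>s. sqrt (Max ((\<lambda>i. (infdist (x i s) (convex hull (\<lambda>j. y j s) ` {1..k}))\<^sup>2) ` {1..n}))) t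
       \<le> ereal (Max ((\<lambda>i. norm (u i (\<lambda>j. y j t) t)) ` {1..k}) + Max ((\<lambda>i. norm (w i t)) ` {1..n}))"
  proof (rule main_at[OF n k _ _ traj t])
    show "\<forall>i\<in>{1..n}. \<forall>j\<in>{1..n}. \<forall>X Y t. 0 \<le> a i j X Y t"
      using a_bnd constants by (meson order_trans less_imp_le)
    show "\<forall>i\<in>{1..n}. \<forall>j\<in>{1..k}. \<forall>X Y t. 0 \<le> b i j X Y t"
      using b_bnd constants by (meson order_trans less_imp_le)
  qed
qed

end
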